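(* Let $q$ be a prime power with $q\equiv1\pmod4$. The Paley sum graph $X_\Sigma(q)$ is a Ramanujan graph. Moreover, if $q=p^{2k}$ with $p$ prime and $\sigma:\mathbb F_q\to\mathbb F_q$ is the automorphism $x\mapsto x^{p^k}$, then the twisted Paley graph $X(q)^\sigma$ and the twisted Paley sum graph $X_\Sigma(q)^\sigma$ are Ramanujan graphs.
   Context: Let $Q=\{x^2:x\in\mathbb F_q^*\}$ be the set of nonzero squares in $\mathbb F_q$. All graphs have vertex set $\mathbb F_q$ and, for each $s\in Q$: the Paley sum graph $X_\Sigma(q)$ has an edge from $x$ to $-x+s$; the twisted Paley graph $X(q)^\sigma$ has an edge from $x$ to $\sigma(x+s)$; the twisted Paley sum graph $X_\Sigma(q)^\sigma$ has an edge from $x$ to $\sigma(-x+s)$. A $k$-regular undirected graph is Ramanujan if every eigenvalue $\lambda$ of its adjacency matrix with $|\lambda|\ne k$ satisfies $|\lambda|\le2\sqrt{k-1}$. *)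

theory Defs
  imports Complex_Main "HOL-Computational_Algebra.Primes"
begin

definition sq_set :: "'a::{finite,field} set" where
  "sq_set = {y. \<exists>x. x \<noteq> 0 \<and> y = x ^ 2}"

definition graph_adj :: "('a::{finite,field} \<Rightarrow> 'a \<Rightarrow> 'a) \<Rightarrow> 'a \<Rightarrow> 'a \<Rightarrow> real" where
  "graph_adj f x y = real (card {s \<in> sq_set. y = f x s})"

definition paley_sum_adj :: "'a::{finite,field} \<Rightarrow> 'a \<Rightarrow> real" where
  "paley_sum_adj = graph_adj (\<lambda>x s. - x + s)"

definition twisted_paley_adj :: "('a::{finite,field} \<Rightarrow> 'a) \<Rightarrow> 'a \<Rightarrow> 'a \<Rightarrow> real" where
  "twisted_paley_adj \<sigma> = graph_adj (\<lambda>x s. \<sigma> (x + s))"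

definition twisted_paley_sum_adj :: "('a::{finite,field} \<Rightarrow> 'a) \<Rightarrow> 'a \<Rightarrow> 'a \<Rightarrow> real" where
  "twisted_paley_sum_adj \<sigma> = graph_adj (\<lambda>x s. \<sigma> (- x + s))"

definition is_eigenvalue :: "('a::finite \<Rightarrow> 'a \<Rightarrow> real) \<Rightarrow> complex \<Rightarrow> bool" where
  "is_eigenvalue A mu \<longleftrightarrow> (\<exists>v :: 'a \<Rightarrow> complex. v \<noteq> (\<lambda>_. 0) \<and>
      (\<forall>x. (\<Sum>y\<in>UNIV. complex_of_real (A x y) * v y) = mu * v x))"

definition ramanujan_k :: "nat \<Rightarrow> ('a::finite \<Rightarrow> 'a \<Rightarrow> real) \<Rightarrow> bool" where
  "ramanujan_k k A \<longleftrightarrow>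
     (\<forall>x y. A x y = A y x) \<and>
     (\<forall>x. (\<Sum>y\<in>UNIV. A x y) = real k) \<and>
     (\<forall>mu. is_eigenvalue A mu \<and> cmod mu \<noteq> real k \<longrightarrow> cmod mu \<le> 2 * sqrt (real k - 1))"

definition is_ramanujan :: "('a::finite \<Rightarrow> 'a \<Rightarrow> real) \<Rightarrow> bool" where
  "is_ramanujan A \<longleftrightarrow> (\<exists>k. ramanujan_k k A)"

end

theory Submission
  imports Defs
begin

lemma card_of_nat_zero: "of_nat (card (UNIV :: 'a set)) = (0::'a::{finite,field})"
proof -
  have "(\<Sum>y\<in>(UNIV::'a set). y) = (\<Sum>y\<in>UNIV. y + 1)"
    by (rule sum.reindex_bij_witness[of _ "\<lambda>y. y + 1" "\<lambda>y. y - 1"]) auto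
  also have "\<dots> = (\<Sum>y\<in>UNIV. y) + of_nat (card (UNIV :: 'a set))"
    by (simp add: sum.distrib)
  finally show ?thesis by simp
qed

lemma two_ne_zero_field:
  assumes hq: "card (UNIV :: 'a::{finite,field} set) mod 4 = 1"
  shows "(2::'a) \<noteq> 0"
proof
  assume h2: "(2::'a) = 0"
  obtain m where m: "card (UNIV :: 'a set) = 4 * m + 1" using hq by (metis div_mult_mod_eq mult.commute)
  have "(0::'a) = of_nat (4 * m + 1)" using card_of_nat_zero[where 'a='a] m by simp
  also have "\<dots> = 2 * (2 * of_nat m) + 1" by simp
  also have "\<dots> = 1" using h2 by simp
  finally show False by simp
qed

lemma sq_iff: "y \<in> sq_set \<longleftrightarrow> (\<exists>x. x \<noteq> 0 \<and> y = x ^ 2)"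
  by (simp add: sq_set_def)

lemma sq_ne0: "y \<in> sq_set \<Longrightarrow> y \<noteq> 0"
  by (auto simp: sq_set_def)

lemma sq_in: "(x::'a::{finite,field}) \<noteq> 0 \<Longrightarrow> x ^ 2 \<in> sq_set"
  by (auto simp: sq_set_def)

lemma sq_one: "1 \<in> sq_set"
  using sq_in[of 1] by simp

lemma sq_mult: "a \<in> sq_set \<Longrightarrow> b \<in> sq_set \<Longrightarrow> a * b \<in> sq_set"
proof -
  assume "a \<in> sq_set" "b \<in> sq_set"
  then obtain x y where "x \<noteq> 0" "a = x^2" "y \<noteq> 0" "b = y^2" by (auto simp: sq_set_def)
  then show ?thesis using sq_in[of "x*y"] by (simp add: power_mult_distrib)
qed

lemma sq_inverse: "a \<in> sq_set \<Longrightarrow> inverse a \<in> sq_set"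
proof -
  assume "a \<in> sq_set"
  then obtain x where "x \<noteq> 0" "a = x^2" by (auto simp: sq_set_def)
  then show ?thesis using sq_in[of "inverse x"] by (simp add: power_inverse)
qed

lemma sq_divide: "a \<in> sq_set \<Longrightarrow> b \<in> sq_set \<Longrightarrow> a / b \<in> sq_set"
  by (simp add: divide_inverse sq_mult sq_inverse)

lemma pow_card_same: "(x::'a::{finite,field}) ^ card (UNIV :: 'a set) = x"
proof (cases "x = 0")
  case False
  have "x * (\<Prod>y\<in>UNIV-{0}. x * y) = x * x ^ (card (UNIV :: 'a set) - 1) * \<Prod>(UNIV-{0})"
    by (simp add: prod.distrib mult_ac)
  also have "x * x ^ (card (UNIV :: 'a set) - 1) = x ^ Suc (card (UNIV :: 'a set) - 1)"
    by (subst power_Suc) auto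
  also have "Suc (card (UNIV :: 'a set) - 1) = card (UNIV :: 'a set)"
    using finite_UNIV_card_ge_0[where ?'a = 'a] by simp
  also have "(\<Prod>y\<in>UNIV-{0}. x * y) = (\<Prod>y\<in>UNIV-{0}. y)"
    by (rule prod.reindex_bij_witness[of _ "\<lambda>y. y / x" "\<lambda>y. x * y"]) (use False in auto)
  finally show ?thesis
    by simp
qed (use finite_UNIV_card_ge_0[where ?'a = 'a] in auto)

lemma card_sq:
  assumes hq: "card (UNIV :: 'a::{finite,field} set) mod 4 = 1"
  shows "2 * card (sq_set :: 'a set) = card (UNIV :: 'a set) - 1"
proof -
  have h2: "(2::'a) \<noteq> 0" by (rule two_ne_zero_field[OF hq])
  let ?T = "UNIV - {0::'a}"
  have A: "(\<Sum>u\<in>(sq_set::'a set). card {x\<in>?T. x^2 = u}) = 1 * card ?T"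
  proof (rule sum_multicount)
    show "\<forall>x\<in>?T. card {u\<in>sq_set. x^2 = u} = 1"
    proof
      fix x assume "x \<in> ?T"
      then have "{u\<in>sq_set. x^2 = u} = {x^2}" using sq_in[of x] by blast
      then show "card {u\<in>sq_set. x^2 = u} = 1" by simp
    qed
    show "finite (sq_set::'a set)" by simp
    show "finite ?T" by simp
  qed
  have B: "card {x\<in>?T. x^2 = u} = 2" if hu: "u \<in> sq_set" for u :: 'a
  proof -
    obtain r where r: "r \<noteq> 0" "u = r^2" using hu by (auto simp: sq_set_def)
    have "{x\<in>?T. x^2 = u} = {r, -r}"
    proof (rule set_eqI)
      fix x
      show "x \<in> {x\<in>?T. x^2 = u} \<longleftrightarrow> x \<in> {r, -r}"
        using r power2_eq_iff[of x r] by auto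
    qed
    moreover have "r \<noteq> -r"
    proof
      assume "r = -r" then have "2 * r = 0" by (metis add.right_inverse mult_2)
      then show False using h2 r(1) by simp
    qed
    ultimately show "card {x\<in>?T. x^2 = u} = 2" by simp
  qed
  have "(\<Sum>u\<in>(sq_set::'a set). card {x\<in>?T. x^2 = u}) = (\<Sum>u\<in>(sq_set::'a set). 2)"
    by (rule sum.cong) (use B in auto)
  then have "2 * card (sq_set :: 'a set) = card ?T" using A by simp
  also have "card ?T = card (UNIV :: 'a set) - 1" by (simp add: card_Diff_subset)
  finally show ?thesis .
qed

lemma even_card_involution:
  "finite S \<Longrightarrow> (\<forall>x\<in>S. f x \<in> S \<and> f x \<noteq> x \<and> f (f x) = x) \<Longrightarrow> even (card S)"
proof (induction "card S" arbitrary: S rule: less_induct)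
  case less
  show ?case
  proof (cases "S = {}")
    case True thus ?thesis by simp
  next
    case False
    then obtain a where a: "a \<in> S" by blast
    have fa: "f a \<in> S" "f a \<noteq> a" "f (f a) = a" using a less.prems(2) by auto
    let ?T = "S - {a, f a}"
    have sub: "{a, f a} \<subseteq> S" using a fa by auto
    have c2: "card {a, f a} = 2" using fa by auto
    have cT: "card ?T = card S - 2"
      using card_Diff_subset[OF _ sub] c2 by simp
    have cS: "card S \<ge> 2" using card_mono[OF less.prems(1) sub] c2 by simp
    have "even (card ?T)"
    proof (rule less.hyps)
      show "card ?T < card S" using cT cS by simp
      show "finite ?T" using less.prems by simp
      show "\<forall>x\<in>?T. f x \<in> ?T \<and> f x \<noteq> x \<and> f (f x) = x"
      proof
        fix x assume x: "x \<in> ?T"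
        then have xS: "x \<in> S" "x \<noteq> a" "x \<noteq> f a" by auto
        have fx: "f x \<in> S" "f x \<noteq> x" "f (f x) = x" using xS(1) less.prems(2) by auto
        have "f x \<noteq> a" using fx(3) xS(3) by auto
        moreover have "f x \<noteq> f a" using fx(3) fa(3) xS(2) by metis
        ultimately show "f x \<in> ?T \<and> f x \<noteq> x \<and> f (f x) = x" using fx by auto
      qed
    qed
    then show ?thesis using cT cS by auto
  qed
qed

lemma minus_one_sq:
  assumes hq: "card (UNIV :: 'a::{finite,field} set) mod 4 = 1"
  shows "(-1::'a) \<in> sq_set"
proof (rule ccontr)
  assume nm: "(-1::'a) \<notin> sq_set"
  have ev: "even (card (sq_set :: 'a set))"
  proof -
    have "2 * card (sq_set :: 'a set) = card (UNIV :: 'a set) - 1" by (rule card_sq[OF hq])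
    moreover have "4 dvd card (UNIV :: 'a set) - 1" using hq by presburger
    ultimately show ?thesis by presburger
  qed
  let ?S = "(sq_set :: 'a set) - {1}"
  have "even (card ?S)"
  proof (rule even_card_involution[where f = inverse])
    show "finite ?S" by simp
    show "\<forall>x\<in>?S. inverse x \<in> ?S \<and> inverse x \<noteq> x \<and> inverse (inverse x) = x"
    proof
      fix x assume x: "x \<in> ?S"
      have x0: "x \<noteq> 0" using x sq_ne0 by blast
      have "inverse x \<in> sq_set" using x sq_inverse by blast
      moreover have "inverse x \<noteq> 1" using x by auto
      moreover have "inverse x \<noteq> x"
      proof
        assume "inverse x = x"
        then have "x * x = 1" using x0 by (metis right_inverse)
        then have "x^2 = 1^2" by (simp add: power2_eq_square)
        then have "x = 1 \<or> x = -1" by (metis power2_eq_iff)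
        then show False using x nm by auto
      qed
      ultimately show "inverse x \<in> ?S \<and> inverse x \<noteq> x \<and> inverse (inverse x) = x" by simp
    qed
  qed
  moreover have "card ?S = card (sq_set :: 'a set) - 1" by (rule card_Diff_singleton[OF sq_one])
  moreover have "card (sq_set :: 'a set) > 0" by (rule card_gt_0_iff[THEN iffD2]) (use sq_one in auto)
  ultimately show False using ev by simp
qed

lemma sq_uminus:
  assumes hq: "card (UNIV :: 'a::{finite,field} set) mod 4 = 1"
  shows "(-x::'a) \<in> sq_set \<longleftrightarrow> x \<in> sq_set"
proof -
  have "\<And>y::'a. y \<in> sq_set \<Longrightarrow> -y \<in> sq_set"
    using sq_mult[OF minus_one_sq[OF hq]] by (metis mult_minus1)
  then show ?thesis by (metis minus_minus)
qed

lemma nonsq_mult: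
  assumes hq: "card (UNIV :: 'a::{finite,field} set) mod 4 = 1"
  and a: "(a::'a) \<noteq> 0" "a \<notin> sq_set" and b: "b \<noteq> 0" "b \<notin> sq_set"
  shows "a * b \<in> sq_set"
proof -
  let ?N = "(UNIV - {0::'a}) - sq_set"
  have sub: "sq_set \<subseteq> UNIV - {0::'a}" using sq_ne0 by blast
  have cN: "card ?N = card (sq_set::'a set)"
    using card_Diff_subset[OF _ sub] card_sq[OF hq] by (simp add: card_Diff_subset)
  have img: "(\<lambda>u. a * u) ` sq_set \<subseteq> ?N"
  proof
    fix y assume "y \<in> (\<lambda>u. a * u) ` sq_set"
    then obtain u where u: "u \<in> sq_set" "y = a * u" by blast
    have u0: "u \<noteq> 0" using u sq_ne0 by blast
    have "y \<noteq> 0" using u u0 a by simp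
    moreover have "y \<notin> sq_set"
    proof
      assume "y \<in> sq_set"
      then have "y / u \<in> sq_set" using u sq_divide by blast
      then show False using u u0 a by simp
    qed
    ultimately show "y \<in> ?N" by simp
  qed
  have inj: "inj_on (\<lambda>u. a * u) sq_set" using a by (auto intro: inj_onI)
  have "card ((\<lambda>u. a * u) ` sq_set) = card ?N" using card_image[OF inj] cN by simp
  then have eq: "(\<lambda>u. a * u) ` sq_set = ?N" using img by (simp add: card_subset_eq)
  have "b \<in> ?N" using b by simp
  then obtain u where u: "u \<in> sq_set" "b = a * u" using eq by blast
  have "a * b = a^2 * u" using u by (simp add: power2_eq_square)
  then show ?thesis using sq_mult[OF sq_in[OF a(1)] u(1)] by simp
qed

definition eta :: "'a::{finite,field} \<Rightarrow> real" where
  "eta x = (if x = 0 then 0 else if x \<in> sq_set then 1 else -1)"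

lemma eta_mult:
  assumes hq: "card (UNIV :: 'a::{finite,field} set) mod 4 = 1"
  shows "eta ((x::'a) * y) = eta x * eta y"
proof (cases "x = 0 \<or> y = 0")
  case True then show ?thesis by (auto simp: eta_def)
next
  case False
  then have x: "x \<noteq> 0" and y: "y \<noteq> 0" by auto
  show ?thesis
  proof (cases "x \<in> sq_set"; cases "y \<in> sq_set")
    assume "x \<in> sq_set" "y \<in> sq_set" then show ?thesis using sq_mult x y by (simp add: eta_def)
  next
    assume h: "x \<in> sq_set" "y \<notin> sq_set"
    have "x * y \<notin> sq_set"
    proof
      assume "x * y \<in> sq_set" then have "(x * y) / x \<in> sq_set" using h sq_divide by blast
      then show False using h x by simp
    qed
    then show ?thesis using h x y by (simp add: eta_def)
  next
    assume h: "x \<notin> sq_set" "y \<in> sq_set"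
    have "x * y \<notin> sq_set"
    proof
      assume "x * y \<in> sq_set" then have "(x * y) / y \<in> sq_set" using h sq_divide by blast
      then show False using h y by simp
    qed
    then show ?thesis using h x y by (simp add: eta_def)
  next
    assume h: "x \<notin> sq_set" "y \<notin> sq_set"
    then show ?thesis using nonsq_mult[OF hq x _ y] x y by (simp add: eta_def)
  qed
qed

lemma eta_uminus:
  assumes hq: "card (UNIV :: 'a::{finite,field} set) mod 4 = 1"
  shows "eta (-(x::'a)) = eta x"
  using sq_uminus[OF hq, of x] by (simp add: eta_def)

lemma eta_sq: "(x::'a::{finite,field}) \<noteq> 0 \<Longrightarrow> eta x * eta x = 1"
  by (simp add: eta_def)

lemma eta_sum:
  assumes hq: "card (UNIV :: 'a::{finite,field} set) mod 4 = 1"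
  shows "(\<Sum>x\<in>(UNIV::'a set). eta x) = 0"
proof -
  have sub: "sq_set \<subseteq> UNIV - {0::'a}" using sq_ne0 by blast
  have "card (sq_set :: 'a set) < card (UNIV - {0::'a})"
  proof -
    have "card {0::'a, 1} \<le> card (UNIV::'a set)" by (rule card_mono) auto
    then have "card (UNIV :: 'a set) \<ge> 2" by simp
    then show ?thesis using card_sq[OF hq] by (simp add: card_Diff_subset)
  qed
  have "\<not> (UNIV - {0::'a}) \<subseteq> sq_set"
  proof
    assume "UNIV - {0::'a} \<subseteq> sq_set"
    then have "card (UNIV - {0::'a}) \<le> card (sq_set :: 'a set)" by (intro card_mono) auto
    then show False using \<open>card (sq_set :: 'a set) < card (UNIV - {0::'a})\<close> by simp
  qed
  then obtain d where d: "d \<in> UNIV - {0::'a}" "d \<notin> sq_set" by blast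
  then have d0: "d \<noteq> 0" by simp
  have ed: "eta d = -1" using d by (simp add: eta_def)
  have "(\<Sum>x\<in>(UNIV::'a set). eta x) = (\<Sum>x\<in>UNIV. eta (d * x))"
    by (rule sum.reindex_bij_witness[of _ "\<lambda>x. d * x" "\<lambda>x. x / d"]) (use d0 in simp_all)
  also have "\<dots> = - (\<Sum>x\<in>(UNIV::'a set). eta x)"
    by (simp add: eta_mult[OF hq] ed sum_negf)
  finally show ?thesis by simp
qed

lemma sum_remove0: "(\<Sum>x\<in>(UNIV::'a::{finite,field} set). f x) = f 0 + (\<Sum>x\<in>UNIV - {0}. f x)"
  by (rule sum.remove) auto

lemma eta_jacobi:
  assumes hq: "card (UNIV :: 'a::{finite,field} set) mod 4 = 1"
  shows "(\<Sum>s\<in>(UNIV::'a set). eta s * eta (d - s)) =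
           (if d = 0 then real (card (UNIV::'a set)) - 1 else -1)"
proof (cases "d = 0")
  case True
  have "(\<Sum>s\<in>(UNIV::'a set). eta s * eta (d - s)) = (\<Sum>s\<in>(UNIV::'a set). eta s * eta s)"
    using True by (simp add: eta_uminus[OF hq])
  also have "\<dots> = eta (0::'a) * eta (0::'a) + (\<Sum>s\<in>UNIV - {0::'a}. eta s * eta s)" by (rule sum_remove0[of "\<lambda>s. eta s * eta s"])
  also have "(\<Sum>s\<in>UNIV - {0::'a}. eta s * eta s) = (\<Sum>s\<in>UNIV - {0::'a}. 1)"
    by (rule sum.cong) (auto simp: eta_sq)
  also have "\<dots> = real (card (UNIV::'a set)) - 1"
    using finite_UNIV_card_ge_0[where 'a='a] by (simp add: card_Diff_subset of_nat_diff)
  finally show ?thesis using True by (simp add: eta_def)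
next
  case False
  have "(\<Sum>s\<in>(UNIV::'a set). eta s * eta (d - s)) = eta (0::'a) * eta (d - 0) + (\<Sum>s\<in>UNIV - {0::'a}. eta s * eta (d - s))"
    by (rule sum_remove0[of "\<lambda>s. eta s * eta (d - s)"])
  also have "(\<Sum>s\<in>UNIV - {0::'a}. eta s * eta (d - s)) = (\<Sum>s\<in>UNIV - {0::'a}. eta (d / s - 1))"
  proof (rule sum.cong)
    fix s :: 'a assume "s \<in> UNIV - {0}"
    then have s0: "s \<noteq> 0" by simp
    have "d - s = s * (d / s - 1)" using s0 by (simp add: field_simps)
    then have "eta s * eta (d - s) = (eta s * eta s) * eta (d / s - 1)"
      by (simp add: eta_mult[OF hq])
    then show "eta s * eta (d - s) = eta (d / s - 1)" using eta_sq[OF s0] by simp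
  qed simp
  also have "\<dots> = (\<Sum>t\<in>UNIV - {0::'a}. eta (t - 1))"
    by (rule sum.reindex_bij_witness[of _ "\<lambda>x. d / x" "\<lambda>x. d / x"]) (use False in simp_all)
  also have "(\<Sum>t\<in>UNIV - {0::'a}. eta (t - 1)) = (\<Sum>t\<in>(UNIV::'a set). eta (t - 1)) - eta (0 - 1::'a)"
    using sum_remove0[of "\<lambda>t::'a. eta (t - 1)"] by linarith
  also have "(\<Sum>t\<in>(UNIV::'a set). eta (t - 1)) = (\<Sum>t\<in>(UNIV::'a set). eta t)"
    by (rule sum.reindex_bij_witness[of _ "\<lambda>x. x + 1" "\<lambda>x. x - 1"]) simp_all
  also have "eta (0 - 1::'a) = 1" using minus_one_sq[OF hq] sq_ne0 by (simp add: eta_def)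
  finally show ?thesis using False eta_sum[OF hq] by (simp add: eta_def)
qed

lemma char_eq:
  assumes p: "prime p" and c: "card (UNIV::'a::{finite,field} set) = p ^ (2 * k)"
  shows "CHAR('a) = p"
proof -
  have "CHAR('a) dvd card (UNIV::'a set)"
    using card_of_nat_zero[where 'a='a] of_nat_eq_0_iff_char_dvd by blast
  moreover have pc: "prime CHAR('a)"
    by (rule prime_CHAR_semidom) (rule finite_imp_CHAR_pos, simp)
  ultimately have "CHAR('a) dvd p" using c prime_dvd_power by metis
  then show ?thesis using pc p primes_dvd_imp_eq by blast
qed

lemma frob_add:
  assumes p: "prime p" and c: "card (UNIV::'a::{finite,field} set) = p ^ (2 * k)"
  shows "((x::'a) + y) ^ (p ^ k) = x ^ (p ^ k) + y ^ (p ^ k)"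
  by (rule freshmans_dream') (use char_eq[OF p c] p in simp_all)

lemma frob_inv:
  assumes p: "prime p" and c: "card (UNIV::'a::{finite,field} set) = p ^ (2 * k)"
  shows "((x::'a) ^ (p ^ k)) ^ (p ^ k) = x"
proof -
  have "((x::'a) ^ (p ^ k)) ^ (p ^ k) = x ^ (p ^ k * p ^ k)" by (simp add: power_mult)
  also have "p ^ k * p ^ k = card (UNIV::'a set)" using c by (simp add: power_add[symmetric] mult_2)
  finally show ?thesis using pow_card_same by simp
qed

lemma frob_neg:
  assumes p: "prime p" and c: "card (UNIV::'a::{finite,field} set) = p ^ (2 * k)"
  shows "(-(x::'a)) ^ (p ^ k) = - (x ^ (p ^ k))"
proof -
  have pos: "p ^ k > 0" using p prime_gt_0_nat by simp
  have "x ^ (p ^ k) + (-x) ^ (p ^ k) = (x + -x) ^ (p ^ k)" by (rule frob_add[OF p c, symmetric])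
  also have "\<dots> = 0" using pos by simp
  finally show ?thesis by (simp add: eq_neg_iff_add_eq_0 add.commute)
qed

lemma frob_diff:
  assumes p: "prime p" and c: "card (UNIV::'a::{finite,field} set) = p ^ (2 * k)"
  shows "((x::'a) - y) ^ (p ^ k) = x ^ (p ^ k) - y ^ (p ^ k)"
  using frob_add[OF p c, of x "-y"] frob_neg[OF p c, of y] by simp

lemma frob_sq:
  assumes p: "prime p" and c: "card (UNIV::'a::{finite,field} set) = p ^ (2 * k)"
  shows "(x::'a) ^ (p ^ k) \<in> sq_set \<longleftrightarrow> x \<in> sq_set"
proof -
  have pos: "p ^ k > 0" using p prime_gt_0_nat by simp
  have *: "(y::'a) ^ (p ^ k) \<in> sq_set" if hy: "y \<in> sq_set" for y
  proof -
    obtain r where r: "r \<noteq> 0" "y = r^2" using hy by (auto simp: sq_set_def)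
    have eq: "y ^ (p ^ k) = (r ^ (p ^ k))^2" using r by (simp add: power2_eq_square power_mult_distrib)
    have "(r ^ (p ^ k))^2 \<in> sq_set" by (rule sq_in) (simp add: r)
    then show ?thesis using eq by simp
  qed
  show ?thesis
  proof
    assume "x ^ (p ^ k) \<in> sq_set"
    then have "(x ^ (p ^ k)) ^ (p ^ k) \<in> sq_set" by (rule *)
    then show "x \<in> sq_set" using frob_inv[OF p c] by simp
  qed (rule *)
qed

definition adjr :: "('a::{finite,field} \<Rightarrow> 'a) \<Rightarrow> 'a \<Rightarrow> 'a \<Rightarrow> real" where
  "adjr \<rho> x y = (if y - \<rho> x \<in> sq_set then 1 else 0)"

lemma sum_indicator_sq:
  "(\<Sum>t\<in>(UNIV::'a::{finite,field} set). (if t \<in> sq_set then 1 else 0::'b::comm_semiring_1)) = of_nat (card (sq_set::'a set))"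
  by (simp add: sum.If_cases)

lemma final_ineq:
  fixes m s :: real
  assumes "m \<ge> 0" "s \<ge> 0" "s * s \<ge> 5" "2 * m \<le> s + 1"
  shows "m * m \<le> 2 * (s * s) - 6"
proof -
  have "s \<ge> 2"
  proof (rule ccontr)
    assume "\<not> s \<ge> 2" then have "s * s < 2 * 2" using assms(2) by (intro mult_strict_mono) auto
    then show False using assms(3) by simp
  qed
  have "(2*m) * (2*m) \<le> (s+1) * (s+1)" using assms by (intro mult_mono) auto
  moreover have "s * (s - 2) \<ge> 0" using \<open>s \<ge> 2\<close> by simp
  ultimately show ?thesis using assms(3) by (simp add: algebra_simps)
qed

lemma ramanujan_adjr:
  assumes hq: "card (UNIV :: 'a::{finite,field} set) mod 4 = 1"
    and inv: "\<And>x::'a. \<rho> (\<rho> x) = x"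
    and hom: "\<And>x y::'a. \<rho> (x - y) = \<rho> x - \<rho> y"
    and sqp: "\<And>t::'a. \<rho> t \<in> sq_set \<longleftrightarrow> t \<in> sq_set"
  shows "ramanujan_k (card (sq_set::'a set)) (adjr \<rho>)"
proof -
  define k where "k = card (sq_set::'a set)"
  define q where "q = card (UNIV::'a set)"
  have kq: "2 * k = q - 1" unfolding k_def q_def by (rule card_sq[OF hq])
  have q2: "q \<ge> 2"
  proof -
    have "card {0::'a, 1} \<le> card (UNIV::'a set)" by (rule card_mono) auto
    then show ?thesis unfolding q_def by simp
  qed
  have q5: "q \<ge> 5" using q2 hq unfolding q_def by presburger
  have kq': "2 * real k = real q - 1" using kq q5 by linarith
  define chi :: "'a \<Rightarrow> complex" where "chi t = (if t \<in> sq_set then 1 else 0)" for t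
  define ceta :: "'a \<Rightarrow> complex" where "ceta t = complex_of_real (eta t)" for t
  have sym_sq: "(y - \<rho> x \<in> sq_set) \<longleftrightarrow> (x - \<rho> y \<in> sq_set)" for x y :: 'a
  proof -
    have "(y - \<rho> x \<in> sq_set) \<longleftrightarrow> (\<rho> (y - \<rho> x) \<in> sq_set)" using sqp by simp
    also have "\<rho> (y - \<rho> x) = - (x - \<rho> y)" using hom inv by simp
    also have "(- (x - \<rho> y) \<in> sq_set) \<longleftrightarrow> (x - \<rho> y \<in> sq_set)" by (rule sq_uminus[OF hq])
    finally show ?thesis .
  qed
  have symm: "\<forall>x y. adjr \<rho> x y = adjr \<rho> y x"
    unfolding adjr_def using sym_sq by simp
  have shift: "(\<Sum>y\<in>(UNIV::'a set). f (y - c)) = (\<Sum>t\<in>(UNIV::'a set). f t)" for f :: "'a \<Rightarrow> 'b::comm_monoid_add" and c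
    by (rule sum.reindex_bij_witness[of _ "\<lambda>t. t + c" "\<lambda>y. y - c"]) auto
  have rowc: "(\<Sum>y\<in>(UNIV::'a set). chi (y - c)) = of_nat k" for c
    using shift[of chi c] sum_indicator_sq[where 'a='a and 'b=complex] unfolding chi_def k_def by simp
  have rows: "\<forall>x. (\<Sum>y\<in>UNIV. adjr \<rho> x y) = real k"
  proof
    fix x
    have "(\<Sum>y\<in>(UNIV::'a set). adjr \<rho> x y) = (\<Sum>t\<in>(UNIV::'a set). (if t \<in> sq_set then 1 else 0))"
      using shift[of "\<lambda>t. (if t \<in> sq_set then 1 else 0::real)" "\<rho> x"] unfolding adjr_def by simp
    also have "\<dots> = real k" unfolding k_def by (rule sum_indicator_sq)
    finally show "(\<Sum>y\<in>UNIV. adjr \<rho> x y) = real k" .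
  qed
  have adj_chi: "complex_of_real (adjr \<rho> x y) = chi (y - \<rho> x)" for x y
    unfolding adjr_def chi_def by simp
  have eig: "cmod \<mu> \<le> 2 * sqrt (real k - 1)"
    if hmu: "is_eigenvalue (adjr \<rho>) \<mu>" "cmod \<mu> \<noteq> real k" for \<mu>
  proof -
    obtain v :: "'a \<Rightarrow> complex" where v0: "v \<noteq> (\<lambda>_. 0)"
      and ev0: "\<forall>x. (\<Sum>y\<in>UNIV. complex_of_real (adjr \<rho> x y) * v y) = \<mu> * v x"
      using hmu(1) unfolding is_eigenvalue_def by blast
    have ev: "(\<Sum>y\<in>UNIV. chi (y - \<rho> x) * v y) = \<mu> * v x" for x
      using ev0 adj_chi by simp
    have sv: "(\<Sum>y\<in>UNIV. v y) = 0"
    proof -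
      have "(\<Sum>x\<in>UNIV. \<Sum>y\<in>UNIV. chi (y - \<rho> x) * v y) = (\<Sum>y\<in>UNIV. \<Sum>x\<in>UNIV. chi (y - \<rho> x) * v y)"
        by (rule sum.swap)
      also have "\<dots> = (\<Sum>y\<in>UNIV. (\<Sum>x\<in>UNIV. chi (x - \<rho> y)) * v y)"
        by (simp add: sum_distrib_right chi_def sym_sq)
      also have "\<dots> = (\<Sum>y\<in>UNIV. of_nat k * v y)" using rowc by simp
      finally have "\<mu> * (\<Sum>x\<in>UNIV. v x) = of_nat k * (\<Sum>y\<in>UNIV. v y)"
        using ev by (simp add: sum_distrib_left)
      then have "(\<mu> - of_nat k) * (\<Sum>y\<in>UNIV. v y) = 0" by (simp add: algebra_simps)
      moreover have "\<mu> \<noteq> of_nat k" using hmu(2) by auto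
      ultimately show ?thesis by simp
    qed
    define w where "w x = v (\<rho> x)" for x
    have sw: "(\<Sum>y\<in>UNIV. w y) = 0"
    proof -
      have "(\<Sum>y\<in>UNIV. w y) = (\<Sum>y\<in>UNIV. v y)" unfolding w_def
        by (rule sum.reindex_bij_witness[of _ \<rho> \<rho>]) (simp_all add: inv)
      then show ?thesis using sv by simp
    qed
    define B where "B u z = (\<Sum>y\<in>UNIV. chi (y - z) * u y)" for u :: "'a \<Rightarrow> complex" and z
    define E where "E u z = (\<Sum>y\<in>UNIV. ceta (y - z) * u y)" for u :: "'a \<Rightarrow> complex" and z
    have Bv: "B v z = \<mu> * w z" for z
      using ev[of "\<rho> z"] unfolding B_def w_def by (simp add: inv)
    have Bw: "B w z = \<mu> * v z" for z
    proof -
      have "B w z = (\<Sum>y\<in>UNIV. chi (\<rho> y - z) * v y)" unfolding B_def w_def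
        by (rule sum.reindex_bij_witness[of _ \<rho> \<rho>]) (simp_all add: inv)
      also have "\<dots> = (\<Sum>y\<in>UNIV. chi (y - \<rho> z) * v y)"
      proof (rule sum.cong)
        fix y
        have "\<rho> (\<rho> y - z) = y - \<rho> z" using hom inv by simp
        then have "(\<rho> y - z \<in> sq_set) \<longleftrightarrow> (y - \<rho> z \<in> sq_set)" using sqp by metis
        then show "chi (\<rho> y - z) * v y = chi (y - \<rho> z) * v y" unfolding chi_def by simp
      qed simp
      also have "\<dots> = \<mu> * v z" by (rule ev)
      finally show ?thesis .
    qed
    have ceta_chi: "ceta t = 2 * chi t - 1 + (if t = 0 then 1 else 0)" for t
      unfolding ceta_def chi_def eta_def using sq_ne0 by auto
    have key1: "E u z = 2 * B u z + u z" if su: "(\<Sum>y\<in>UNIV. u y) = 0" for u z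
    proof -
      have "E u z = (\<Sum>y\<in>UNIV. 2 * (chi (y - z) * u y) - u y + (if y = z then u y else 0))"
        unfolding E_def by (rule sum.cong) (auto simp: ceta_chi algebra_simps)
      also have "\<dots> = 2 * B u z - (\<Sum>y\<in>UNIV. u y) + u z"
        unfolding B_def by (simp add: sum.distrib sum_subtractf sum_distrib_left)
      finally show ?thesis using su by simp
    qed
    have key2: "E (E u) z = of_nat q * u z" if su: "(\<Sum>y\<in>UNIV. u y) = 0" for u z
    proof -
      have inner: "(\<Sum>y\<in>UNIV. ceta (y - z) * ceta (t - y)) = (if t = z then of_nat q - 1 else -1)" for t
      proof -
        have "(\<Sum>y\<in>UNIV. ceta (y - z) * ceta (t - y)) = (\<Sum>s\<in>UNIV. ceta s * ceta ((t - z) - s))"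
          using shift[of "\<lambda>s. ceta s * ceta ((t - z) - s)" z] by (simp add: algebra_simps)
        also have "\<dots> = complex_of_real (\<Sum>s\<in>UNIV. eta s * eta ((t - z) - s))"
          unfolding ceta_def by simp
        also have "\<dots> = (if t = z then of_nat q - 1 else -1)"
          unfolding eta_jacobi[OF hq] q_def by simp
        finally show ?thesis .
      qed
      have "E (E u) z = (\<Sum>y\<in>UNIV. \<Sum>t\<in>UNIV. ceta (y - z) * ceta (t - y) * u t)"
        unfolding E_def by (simp add: sum_distrib_left mult.assoc)
      also have "\<dots> = (\<Sum>t\<in>UNIV. (\<Sum>y\<in>UNIV. ceta (y - z) * ceta (t - y)) * u t)"
        by (subst sum.swap) (simp add: sum_distrib_right)
      also have "\<dots> = (\<Sum>t\<in>UNIV. (if t = z then of_nat q * u t else 0) - u t)"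
        by (rule sum.cong[OF refl]) (simp only: inner, simp add: algebra_simps)
      also have "\<dots> = of_nat q * u z - (\<Sum>t\<in>UNIV. u t)"
        by (simp add: sum_subtractf)
      finally show ?thesis using su by simp
    qed
    have Elin: "E (\<lambda>z. c * f z + g z) z = c * E f z + E g z" for c f g z
      unfolding E_def by (simp add: sum.distrib sum_distrib_left algebra_simps)
    have Ev: "E v = (\<lambda>z. 2 * \<mu> * w z + v z)"
      using key1[OF sv] Bv by (auto simp: fun_eq_iff)
    have Ew: "E w = (\<lambda>z. 2 * \<mu> * v z + w z)"
      using key1[OF sw] Bw by (auto simp: fun_eq_iff)
    define a where "a = of_nat q - 1 - 4 * \<mu>^2"
    have r1: "a * v z = 4 * \<mu> * w z" for z
    proof -
      have "of_nat q * v z = E (E v) z" using key2[OF sv] by simp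
      also have "\<dots> = 2 * \<mu> * E w z + E v z" using Elin[of "2 * \<mu>" w v z] Ev by simp
      also have "\<dots> = 4 * \<mu>^2 * v z + 4 * \<mu> * w z + v z" unfolding Ev Ew
        by (simp add: algebra_simps power2_eq_square)
      finally show ?thesis unfolding a_def by (simp add: algebra_simps)
    qed
    have r2: "a * w z = 4 * \<mu> * v z" for z
    proof -
      have "of_nat q * w z = E (E w) z" using key2[OF sw] by simp
      also have "\<dots> = 2 * \<mu> * E v z + E w z" using Elin[of "2 * \<mu>" v w z] Ew by simp
      also have "\<dots> = 4 * \<mu>^2 * w z + 4 * \<mu> * v z + w z" unfolding Ev Ew
        by (simp add: algebra_simps power2_eq_square)
      finally show ?thesis unfolding a_def by (simp add: algebra_simps)
    qed
    obtain z0 where z0: "v z0 \<noteq> 0" using v0 by (auto simp: fun_eq_iff)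
    have "a * a * v z0 = 16 * \<mu>^2 * v z0"
    proof -
      have "a * a * v z0 = a * (4 * \<mu> * w z0)" using r1[of z0] by simp
      also have "\<dots> = 4 * \<mu> * (a * w z0)" by (simp add: algebra_simps)
      also have "\<dots> = 16 * \<mu>^2 * v z0" using r2[of z0] by (simp add: power2_eq_square)
      finally show ?thesis .
    qed
    then have "a * a = 16 * \<mu>^2" using z0 by simp
    then have "(a - 4 * \<mu>) * (a + 4 * \<mu>) = 0" by (simp add: algebra_simps power2_eq_square)
    then have "a - 4 * \<mu> = 0 \<or> a + 4 * \<mu> = 0" by (simp only: mult_eq_0_iff)
    then have "a = 4 * \<mu> \<or> a = - (4 * \<mu>)" by (simp only: eq_neg_iff_add_eq_0 right_minus_eq)
    then obtain e :: complex where e: "cmod e = 1" "(2 * \<mu> + e)^2 = of_nat q"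
    proof
      assume "a = 4 * \<mu>"
      then have "(2 * \<mu> + 1)^2 = of_nat q" unfolding a_def by (simp add: algebra_simps power2_eq_square)
      then show thesis using that[of 1] by simp
    next
      assume "a = - (4 * \<mu>)"
      then have "(2 * \<mu> + (-1))^2 = of_nat q" unfolding a_def by (simp add: algebra_simps power2_eq_square)
      then show thesis using that[of "-1"] by simp
    qed
    have "cmod (2 * \<mu> + e) ^ 2 = real q"
      using arg_cong[OF e(2), of cmod] by (simp add: norm_power)
    then have ce: "cmod (2 * \<mu> + e) = sqrt (real q)"
      by (metis norm_ge_zero real_sqrt_unique)
    have "cmod (2 * \<mu>) \<le> cmod (2 * \<mu> + e) + cmod e"
      using norm_triangle_ineq4[of "2 * \<mu> + e" e] by simp
    then have m2: "2 * cmod \<mu> \<le> sqrt (real q) + 1" using ce e(1) by (simp add: norm_mult)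
    have "cmod \<mu> * cmod \<mu> \<le> 2 * (sqrt (real q) * sqrt (real q)) - 6"
      by (rule final_ineq) (use m2 q5 in auto)
    then have "cmod \<mu> ^ 2 \<le> 4 * (real k - 1)" using kq' by (simp add: power2_eq_square)
    then have "cmod \<mu> \<le> sqrt (4 * (real k - 1))" by (rule real_le_rsqrt)
    also have "sqrt (4 * (real k - 1)) = 2 * sqrt (real k - 1)" unfolding real_sqrt_mult by simp
    finally show ?thesis .
  qed
  show ?thesis unfolding ramanujan_k_def k_def[symmetric]
    using symm rows eig by blast
qed

lemma graph_adj_eq:
  assumes "\<And>s. (y = f x s) \<longleftrightarrow> (s = g)"
  shows "graph_adj f x y = (if g \<in> sq_set then 1 else 0)"
proof -
  have "{s \<in> sq_set. y = f x s} = (if g \<in> sq_set then {g} else {})" using assms by auto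
  then show ?thesis unfolding graph_adj_def by simp
qed

theorem theorem5p4:
  assumes "card (UNIV :: 'a::{finite,field} set) mod 4 = 1"
  shows "is_ramanujan (paley_sum_adj :: 'a \<Rightarrow> 'a \<Rightarrow> real)
    \<and> (\<forall>(p::nat) (k::nat). prime p \<and> card (UNIV :: 'a set) = p ^ (2 * k) \<longrightarrow>
         is_ramanujan (twisted_paley_adj (\<lambda>x::'a. x ^ (p ^ k)))
       \<and> is_ramanujan (twisted_paley_sum_adj (\<lambda>x::'a. x ^ (p ^ k))))"
proof -
  note hq = assms
  have P1: "is_ramanujan (paley_sum_adj :: 'a \<Rightarrow> 'a \<Rightarrow> real)"
  proof -
    have eq: "(paley_sum_adj :: 'a \<Rightarrow> 'a \<Rightarrow> real) = adjr uminus"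
    proof (intro ext)
      fix x y :: 'a
      have "paley_sum_adj x y = (if y - (- x) \<in> sq_set then 1 else 0)"
        unfolding paley_sum_adj_def by (rule graph_adj_eq) (auto simp: algebra_simps)
      then show "paley_sum_adj x y = adjr uminus x y"
        unfolding adjr_def by simp
    qed
    have "ramanujan_k (card (sq_set::'a set)) (adjr (uminus :: 'a \<Rightarrow> 'a))"
      by (rule ramanujan_adjr[OF hq]) (simp_all add: sq_uminus[OF hq])
    then show ?thesis unfolding is_ramanujan_def eq by blast
  qed
  have P2: "is_ramanujan (twisted_paley_adj (\<lambda>x::'a. x ^ (p ^ k)))
       \<and> is_ramanujan (twisted_paley_sum_adj (\<lambda>x::'a. x ^ (p ^ k)))"
    if pk: "prime p" "card (UNIV :: 'a set) = p ^ (2 * k)" for p k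
  proof -
    define F where "F x = x ^ (p ^ k)" for x :: 'a
    have Finv: "F (F x) = x" for x unfolding F_def by (rule frob_inv[OF pk])
    have Fneg: "F (- x) = - F x" for x unfolding F_def by (rule frob_neg[OF pk])
    have Fdiff: "F (x - y) = F x - F y" for x y unfolding F_def by (rule frob_diff[OF pk])
    have Fadd: "F (x + y) = F x + F y" for x y unfolding F_def by (rule frob_add[OF pk])
    have Fsq: "F x \<in> sq_set \<longleftrightarrow> x \<in> sq_set" for x unfolding F_def by (rule frob_sq[OF pk])
    have eq1: "twisted_paley_adj F = adjr F"
    proof (intro ext)
      fix x y :: 'a
      have "graph_adj (\<lambda>x s. F (x + s)) x y = (if F (y - F x) \<in> sq_set then 1 else 0)"
      proof (rule graph_adj_eq)
        fix s
        show "(y = F (x + s)) \<longleftrightarrow> (s = F (y - F x))"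
        proof
          assume "y = F (x + s)"
          then have "F y = x + s" using Finv by simp
          then have "s = F y - x" by (simp add: algebra_simps)
          also have "F y - x = F (y - F x)" using Fdiff Finv by simp
          finally show "s = F (y - F x)" .
        next
          assume "s = F (y - F x)"
          then have "x + s = F y" using Fdiff Finv by simp
          then show "y = F (x + s)" using Finv by simp
        qed
      qed
      then show "twisted_paley_adj F x y = adjr F x y"
        unfolding twisted_paley_adj_def adjr_def using Fsq by simp
    qed
    have eq2: "twisted_paley_sum_adj F = adjr (\<lambda>x. - F x)"
    proof (intro ext)
      fix x y :: 'a
      have "graph_adj (\<lambda>x s. F (- x + s)) x y = (if F (y - (- F x)) \<in> sq_set then 1 else 0)"
      proof (rule graph_adj_eq)
        fix s
        show "(y = F (- x + s)) \<longleftrightarrow> (s = F (y - (- F x)))"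
        proof
          assume "y = F (- x + s)"
          then have "F y = - x + s" using Finv by simp
          then have "s = F y + x" by (simp add: algebra_simps)
          also have "F y + x = F (y - (- F x))" using Fadd Finv by simp
          finally show "s = F (y - (- F x))" .
        next
          assume "s = F (y - (- F x))"
          then have "- x + s = F y" using Fadd Finv by simp
          then show "y = F (- x + s)" using Finv by simp
        qed
      qed
      then show "twisted_paley_sum_adj F x y = adjr (\<lambda>x. - F x) x y"
        unfolding twisted_paley_sum_adj_def adjr_def using Fsq by simp
    qed
    have R1: "ramanujan_k (card (sq_set::'a set)) (adjr F)"
      by (rule ramanujan_adjr[OF hq]) (simp_all add: Finv Fdiff Fsq)
    have R2: "ramanujan_k (card (sq_set::'a set)) (adjr (\<lambda>x. - F x))"
      by (rule ramanujan_adjr[OF hq]) (simp_all add: Finv Fdiff Fneg Fsq sq_uminus[OF hq])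
    have "is_ramanujan (twisted_paley_adj F) \<and> is_ramanujan (twisted_paley_sum_adj F)"
      unfolding is_ramanujan_def eq1 eq2 using R1 R2 by blast
    then show ?thesis unfolding F_def[abs_def] .
  qed
  show ?thesis using P1 P2 by blast
qed

end
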